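(* Let $\mathcal A=(Q,\Sigma,\delta,\rho)$ be a connected bireversible Mealy automaton whose labeled orbit tree $\mathfrak t(\mathcal A)$ has no active self-liftable branch, and let $\mathfrak j$ be a jungle tree with trunk of length $n$. For a $\mathfrak j$-word $\mathbf u$ with $|\mathbf u|<n$, a $\sim$-class $\gamma$ of stems containing a stem with prefix $\mathbf u$, and an integer $k\ge0$ with $|\mathbf u|+k\le n$, let $N(\mathbf u,\gamma,k)$ be the number of words $\mathbf v\in Q^k$ such that $\mathbf{uv}$ is a prefix of some stem in $\gamma$. Then $N(\mathbf u,\gamma,k)$ depends only on $|\mathbf u|$ and $k$: if $(\mathbf u,\gamma,k)$ and $(\mathbf u',\gamma',k)$ are two such triples with $|\mathbf u|=|\mathbf u'|$, then $N(\mathbf u,\gamma,k)=N(\mathbf u',\gamma',k)$.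
   Context: Mealy automata. A Mealy automaton is $\mathcal A=(Q,\Sigma,\delta,\rho)$ with $Q,\Sigma$ finite non-empty sets, $\delta=(\delta_i\colon Q\to Q)_{i\in\Sigma}$, $\rho=(\rho_x\colon\Sigma\to\Sigma)_{x\in Q}$; transitions $x\xrightarrow{i\mid\rho_x(i)}\delta_i(x)$. Invertible: each $\rho_x$ a permutation of $\Sigma$; reversible: each $\delta_i$ a permutation of $Q$; bireversible: invertible, reversible, and for each $j\in\Sigma$ the map $x\mapsto\delta_{\rho_x^{-1}(j)}(x)$ is a permutation of $Q$. Connected: the directed graph on $Q$ with edges $x\to\delta_i(x)$ is connected. Extensions: $\rho_x(i\mathbf s)=\rho_x(i)\rho_{\delta_i(x)}(\mathbf s)$; $\rho_{x_1\cdots x_m}=\rho_{x_m}\circ\cdots\circ\rho_{x_1}$; $\delta_i(x\mathbf u)=\delta_i(x)\delta_{\rho_x(i)}(\mathbf u)$ on $Q^*$, $\delta_{i_1\cdots i_m}=\delta_{i_m}\circ\cdots\circ\delta_{i_1}$. The connected components of $\mathcal A^n$ (stateset $Q^n$, transitions $\mathbf u\xrightarrow{i\mid\rho_{\mathbf u}(i)}\delta_i(\mathbf u)$) are, for reversible $\mathcal A$, the orbits of $Q^n$ under the maps $\delta_{\mathbf s}$. Orbit tree $\mathfrak t(\mathcal A)$: vertices at level $n\ge0$ are the connected components of $\mathcal A^n$; an edge from the component of $\mathbf u\in Q^n$ to that of $\mathbf ux$ for all $\mathbf u,x$; edge $C\to D$ labeled $\#D/\#C$. $\top,\bot$ = first/last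 vertex of a downward path; level of an edge/path = level of its top vertex. A word of $Q^*\cup Q^\omega$ represents the initial path through the components of its prefixes. Edge $e$ is liftable to $f$ if every word of $\bot(e)$ has a suffix in $\bot(f)$; paths are liftable if corresponding edges are. $f$ is a legitimate child of $e$ if $\top(f)=\bot(e)$ and $f$ is liftable to $e$. A path/subtree $\mathfrak s$ is $k$-self-liftable if for all $i\ge0$ every path in $\mathfrak s$ starting at level $i+k$ is liftable to a path in $\mathfrak s$ starting at level $i$; self-liftable if $k$-self-liftable for some $k>0$. A branch (infinite initial path) is active if its labels are not eventually all $1$. Jungle trees: for a finite 1-self-liftable initial path $\mathbf e$ of length $n$ whose last edge has at least two legitimate children, all labeled $1$, $\mathfrak j(\mathbf e)$ consists of $\mathbf e$ plus all edges descending from $\bot(\mathbf e)$ that are liftable to the last edge of $\mathbf e$. Stems: the words of $\bot(\mathbf e)\subseteq Q^n$. A $\mathfrak j$-word is a word representing an initial path of $\mathfrak j$. For stems $\mathbf u,\mathbf v$: $\mathbf u\sim\mathbf v$ iff there is $\mathbf s\in Q^*$ such that $\mathbf{usv}$ is a $\mathfrak j$-word and $\rho_{\mathbf{us}}$ is the identity of $\Sigma^*$; $\sim$ is an equivalence relation. *)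

theory Defs
  imports Complex_Main "HOL-Library.Sublist"
begin

text \<open>Mealy automaton with stateset the finite type 'q and alphabet the finite type 'a.
  dl i x = delta_i(x), rh x i = rho_x(i).\<close>

fun rhoA :: "('a \<Rightarrow> 'q \<Rightarrow> 'q) \<Rightarrow> ('q \<Rightarrow> 'a \<Rightarrow> 'a) \<Rightarrow> 'q \<Rightarrow> 'a list \<Rightarrow> 'a list" where
  "rhoA dl rh x [] = []"
| "rhoA dl rh x (i # s) = rh x i # rhoA dl rh (dl i x) s"

fun rhoW :: "('a \<Rightarrow> 'q \<Rightarrow> 'q) \<Rightarrow> ('q \<Rightarrow> 'a \<Rightarrow> 'a) \<Rightarrow> 'q list \<Rightarrow> 'a list \<Rightarrow> 'a list" where
  "rhoW dl rh [] s = s"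
| "rhoW dl rh (x # u) s = rhoW dl rh u (rhoA dl rh x s)"

fun deltaW :: "('a \<Rightarrow> 'q \<Rightarrow> 'q) \<Rightarrow> ('q \<Rightarrow> 'a \<Rightarrow> 'a) \<Rightarrow> 'a \<Rightarrow> 'q list \<Rightarrow> 'q list" where
  "deltaW dl rh i [] = []"
| "deltaW dl rh i (x # u) = dl i x # deltaW dl rh (rh x i) u"

definition bireversible :: "('a \<Rightarrow> 'q \<Rightarrow> 'q) \<Rightarrow> ('q \<Rightarrow> 'a \<Rightarrow> 'a) \<Rightarrow> bool" where
  "bireversible dl rh \<longleftrightarrow> (\<forall>x. bij (rh x)) \<and> (\<forall>i. bij (dl i))
     \<and> (\<forall>j. bij (\<lambda>x. dl (inv (rh x) j) x))"

definition connected_aut :: "('a \<Rightarrow> 'q \<Rightarrow> 'q) \<Rightarrow> ('q \<Rightarrow> 'a \<Rightarrow> 'a) \<Rightarrow> bool" where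
  "connected_aut dl rh \<longleftrightarrow>
     (let E = {(x, dl i x) | x i. True} in \<forall>x y. (x, y) \<in> (E \<union> E\<inverse>)\<^sup>*)"

text \<open>Transitions of A^n (all n at once; they preserve length) and the connected
  component of a word u in A^|u|.\<close>
definition trans_pow :: "('a \<Rightarrow> 'q \<Rightarrow> 'q) \<Rightarrow> ('q \<Rightarrow> 'a \<Rightarrow> 'a) \<Rightarrow> ('q list \<times> 'q list) set" where
  "trans_pow dl rh = {(u, deltaW dl rh i u) | u i. True}"

definition comp :: "('a \<Rightarrow> 'q \<Rightarrow> 'q) \<Rightarrow> ('q \<Rightarrow> 'a \<Rightarrow> 'a) \<Rightarrow> 'q list \<Rightarrow> 'q list set" where
  "comp dl rh u = {v. (u, v) \<in> (trans_pow dl rh \<union> (trans_pow dl rh)\<inverse>)\<^sup>*}"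

definition tedge :: "('a \<Rightarrow> 'q \<Rightarrow> 'q) \<Rightarrow> ('q \<Rightarrow> 'a \<Rightarrow> 'a) \<Rightarrow> 'q list set \<Rightarrow> 'q list set \<Rightarrow> bool" where
  "tedge dl rh C D \<longleftrightarrow> (\<exists>u x. C = comp dl rh u \<and> D = comp dl rh (u @ [x]))"

definition label :: "'q list set \<Rightarrow> 'q list set \<Rightarrow> rat" where
  "label C D = of_nat (card D) / of_nat (card C)"

definition liftable :: "'q list set \<times> 'q list set \<Rightarrow> 'q list set \<times> 'q list set \<Rightarrow> bool" where
  "liftable e f \<longleftrightarrow> (\<forall>w \<in> snd e. \<exists>s. suffix s w \<and> s \<in> snd f)"

definition branch :: "('a \<Rightarrow> 'q \<Rightarrow> 'q) \<Rightarrow> ('q \<Rightarrow> 'a \<Rightarrow> 'a) \<Rightarrow> (nat \<Rightarrow> 'q list set) \<Rightarrow> bool" where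
  "branch dl rh B \<longleftrightarrow> B 0 = comp dl rh [] \<and> (\<forall>j. tedge dl rh (B j) (B (Suc j)))"

definition active_branch :: "(nat \<Rightarrow> 'q list set) \<Rightarrow> bool" where
  "active_branch B \<longleftrightarrow> \<not> (\<exists>N. \<forall>j\<ge>N. label (B j) (B (Suc j)) = 1)"

definition self_liftable_branch :: "(nat \<Rightarrow> 'q list set) \<Rightarrow> bool" where
  "self_liftable_branch B \<longleftrightarrow> (\<exists>k>0. \<forall>j.
      liftable (B (j + k), B (Suc (j + k))) (B j, B (Suc j)))"

definition init_path :: "('a \<Rightarrow> 'q \<Rightarrow> 'q) \<Rightarrow> ('q \<Rightarrow> 'a \<Rightarrow> 'a) \<Rightarrow> nat \<Rightarrow> (nat \<Rightarrow> 'q list set) \<Rightarrow> bool" where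
  "init_path dl rh n P \<longleftrightarrow> P 0 = comp dl rh [] \<and> (\<forall>j<n. tedge dl rh (P j) (P (Suc j)))"

definition legit_child :: "('a \<Rightarrow> 'q \<Rightarrow> 'q) \<Rightarrow> ('q \<Rightarrow> 'a \<Rightarrow> 'a) \<Rightarrow>
    'q list set \<times> 'q list set \<Rightarrow> 'q list set \<times> 'q list set \<Rightarrow> bool" where
  "legit_child dl rh f e \<longleftrightarrow> tedge dl rh (fst f) (snd f) \<and> fst f = snd e \<and> liftable f e"

definition jungle_trunk :: "('a \<Rightarrow> 'q \<Rightarrow> 'q) \<Rightarrow> ('q \<Rightarrow> 'a \<Rightarrow> 'a) \<Rightarrow> nat \<Rightarrow> (nat \<Rightarrow> 'q list set) \<Rightarrow> bool" where
  "jungle_trunk dl rh n P \<longleftrightarrow> n \<ge> 1 \<and> init_path dl rh n P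
     \<and> (\<forall>j. Suc j < n \<longrightarrow> liftable (P (Suc j), P (Suc (Suc j))) (P j, P (Suc j)))
     \<and> (\<exists>f g. f \<noteq> g \<and> legit_child dl rh f (P (n - 1), P n) \<and> legit_child dl rh g (P (n - 1), P n))
     \<and> (\<forall>f. legit_child dl rh f (P (n - 1), P n) \<longrightarrow> label (fst f) (snd f) = 1)"

text \<open>Edges of the jungle tree j(P): the trunk edges, plus all edges descending from P n that
  are liftable to the last trunk edge.  A j-word is a word whose initial path lies in j.\<close>
definition jword :: "('a \<Rightarrow> 'q \<Rightarrow> 'q) \<Rightarrow> ('q \<Rightarrow> 'a \<Rightarrow> 'a) \<Rightarrow> nat \<Rightarrow> (nat \<Rightarrow> 'q list set) \<Rightarrow> 'q list \<Rightarrow> bool" where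
  "jword dl rh n P w \<longleftrightarrow>
     (\<forall>i \<le> min (length w) n. comp dl rh (take i w) = P i)
     \<and> (\<forall>i. n \<le> i \<and> i < length w \<longrightarrow>
          liftable (comp dl rh (take i w), comp dl rh (take (Suc i) w)) (P (n - 1), P n))"

definition stem_equiv :: "('a \<Rightarrow> 'q \<Rightarrow> 'q) \<Rightarrow> ('q \<Rightarrow> 'a \<Rightarrow> 'a) \<Rightarrow> nat \<Rightarrow> (nat \<Rightarrow> 'q list set) \<Rightarrow>
    'q list \<Rightarrow> 'q list \<Rightarrow> bool" where
  "stem_equiv dl rh n P u v \<longleftrightarrow> u \<in> P n \<and> v \<in> P n \<and>
     (\<exists>s. jword dl rh n P (u @ s @ v) \<and> (\<forall>t. rhoW dl rh (u @ s) t = t))"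

definition stem_class :: "('a \<Rightarrow> 'q \<Rightarrow> 'q) \<Rightarrow> ('q \<Rightarrow> 'a \<Rightarrow> 'a) \<Rightarrow> nat \<Rightarrow> (nat \<Rightarrow> 'q list set) \<Rightarrow>
    'q list set \<Rightarrow> bool" where
  "stem_class dl rh n P \<gamma> \<longleftrightarrow> (\<exists>u0 \<in> P n. \<gamma> = {v. stem_equiv dl rh n P u0 v})"

definition Ncount :: "'q list \<Rightarrow> 'q list set \<Rightarrow> nat \<Rightarrow> nat" where
  "Ncount u \<gamma> k = card {v. length v = k \<and> (\<exists>st \<in> \<gamma>. prefix (u @ v) st)}"

end

theory Submission
  imports Defs
begin

fun rl :: "('q \<Rightarrow> 'a \<Rightarrow> 'a) \<Rightarrow> 'q list \<Rightarrow> 'a \<Rightarrow> 'a" where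
  "rl rh [] i = i"
| "rl rh (x # u) i = rl rh u (rh x i)"

lemma rl_append: "rl rh (a @ b) i = rl rh b (rl rh a i)"
  by (induction a arbitrary: i) auto

lemma deltaW_append:
  "deltaW dl rh i (a @ b) = deltaW dl rh i a @ deltaW dl rh (rl rh a i) b"
  by (induction a arbitrary: i) auto

lemma length_deltaW[simp]: "length (deltaW dl rh i u) = length u"
  by (induction u arbitrary: i) auto

lemma take_deltaW: "take j (deltaW dl rh i w) = deltaW dl rh i (take j w)"
  by (induction w arbitrary: i j) (auto split: nat.split simp: take_Cons')

lemma drop_deltaW: "drop j (deltaW dl rh i w) = deltaW dl rh (rl rh (take j w) i) (drop j w)"
proof -
  have "deltaW dl rh i w = deltaW dl rh i (take j w) @ deltaW dl rh (rl rh (take j w) i) (drop j w)"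
    using deltaW_append[of dl rh i "take j w" "drop j w"] by simp
  then show ?thesis
    by (metis append_eq_conv_conj length_deltaW length_take min.absorb4 not_le_imp_less
          drop_all take_all nat_le_linear length_drop list.size(3) deltaW.simps(1) drop_take)
qed

lemma rhoW_append: "rhoW dl rh (a @ b) t = rhoW dl rh b (rhoW dl rh a t)"
  by (induction a arbitrary: t) auto

lemma rhoW_cons: "rhoW dl rh w (i # t) = rl rh w i # rhoW dl rh (deltaW dl rh i w) t"
  by (induction w arbitrary: i t) auto

lemma inj_deltaW:
  assumes "\<And>i. inj (dl i)"
  shows "inj (deltaW dl rh i)"
proof -
  have "deltaW dl rh i u = deltaW dl rh i v \<Longrightarrow> u = v" for u v
  proof (induction u arbitrary: i v)
    case Nil then show ?case by (cases v) auto
  next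
    case (Cons x u)
    then show ?case using assms by (cases v) (auto dest: injD)
  qed
  then show ?thesis by (auto intro: injI)
qed


lemma comp_refl[simp]: "u \<in> comp dl rh u"
  by (simp add: comp_def)

lemma comp_step: "deltaW dl rh i u \<in> comp dl rh u"
proof -
  have "(u, deltaW dl rh i u) \<in> trans_pow dl rh \<union> (trans_pow dl rh)\<inverse>"
    unfolding trans_pow_def by blast
  then show ?thesis unfolding comp_def by (auto intro: r_into_rtrancl)
qed

lemma sym_R: "sym (trans_pow dl rh \<union> (trans_pow dl rh)\<inverse>)"
  by (auto simp: sym_def)

lemma comp_sym: "v \<in> comp dl rh u \<Longrightarrow> u \<in> comp dl rh v"
  using sym_rtrancl[OF sym_R[of dl rh]] unfolding comp_def by (auto simp: sym_def)

lemma comp_trans: "v \<in> comp dl rh u \<Longrightarrow> w \<in> comp dl rh v \<Longrightarrow> w \<in> comp dl rh u"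
  unfolding comp_def by (auto intro: rtrancl_trans)

lemma comp_eq: "v \<in> comp dl rh u \<Longrightarrow> comp dl rh v = comp dl rh u"
  by (meson comp_sym comp_trans subsetI subset_antisym)

lemma comp_deltaW[simp]: "comp dl rh (deltaW dl rh i u) = comp dl rh u"
  by (rule comp_eq[OF comp_step])

lemma comp_invariant:
  assumes "\<And>i w. w \<in> comp dl rh z \<Longrightarrow> f (deltaW dl rh i w) = f w"
    and "v \<in> comp dl rh z"
  shows "f v = f z"
proof -
  have "(z, v) \<in> (trans_pow dl rh \<union> (trans_pow dl rh)\<inverse>)\<^sup>*"
    using assms(2) by (simp add: comp_def)
  then show ?thesis
  proof (induction rule: rtrancl_induct)
    case base then show ?case by simp
  next
    case (step y w)
    have y: "y \<in> comp dl rh z" using step(1) by (simp add: comp_def)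
    have w: "w \<in> comp dl rh z"
      using rtrancl_into_rtrancl[OF step(1) step(2)] by (simp add: comp_def)
    from step(2) obtain i where "w = deltaW dl rh i y \<or> y = deltaW dl rh i w"
      unfolding trans_pow_def by auto
    then show ?case
      using assms(1)[OF y, of i] assms(1)[OF w, of i] step(3) by auto
  qed
qed

lemma comp_length: "v \<in> comp dl rh z \<Longrightarrow> length v = length z"
  using comp_invariant[of dl rh z length v] by simp

lemma comp_mem_deltaW: "(deltaW dl rh i a \<in> comp dl rh z) = (a \<in> comp dl rh z)"
  by (metis comp_deltaW comp_eq comp_refl)

lemma lift_iff:
  assumes "length z0 = n" and "length x \<ge> n"
  shows "(\<forall>y\<in>comp dl rh x. \<exists>s. suffix s y \<and> s \<in> comp dl rh z0)
     \<longleftrightarrow> drop (length x - n) x \<in> comp dl rh z0"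
proof
  assume "\<forall>y\<in>comp dl rh x. \<exists>s. suffix s y \<and> s \<in> comp dl rh z0"
  then obtain s where s: "suffix s x" "s \<in> comp dl rh z0" using comp_refl by blast
  then have "length s = n" using comp_length assms(1) by metis
  with s(1) show "drop (length x - n) x \<in> comp dl rh z0"
    using s(2) by (auto simp: suffix_def)
next
  assume a: "drop (length x - n) x \<in> comp dl rh z0"
  let ?f = "\<lambda>y. drop (length y - n) y \<in> comp dl rh z0"
  have inv: "?f (deltaW dl rh i w) = ?f w" for i w
    by (simp add: drop_deltaW comp_mem_deltaW)
  show "\<forall>y\<in>comp dl rh x. \<exists>s. suffix s y \<and> s \<in> comp dl rh z0"
  proof
    fix y assume "y \<in> comp dl rh x"
    then have "?f y = ?f x" using comp_invariant[of dl rh x ?f y] inv by blast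
    with a show "\<exists>s. suffix s y \<and> s \<in> comp dl rh z0" using suffix_drop by blast
  qed
qed


lemma P_comp:
  assumes "init_path dl rh n P" "j \<le> n"
  shows "\<exists>z. P j = comp dl rh z \<and> length z = j"
  using assms(2)
proof (induction j)
  case 0 then show ?case using assms(1) by (auto simp: init_path_def)
next
  case (Suc j)
  then obtain z where z: "P j = comp dl rh z" "length z = j" by auto
  from assms(1) Suc(2) have "tedge dl rh (P j) (P (Suc j))" by (auto simp: init_path_def)
  then obtain u x where ux: "P j = comp dl rh u" "P (Suc j) = comp dl rh (u @ [x])"
    by (auto simp: tedge_def)
  have "u \<in> comp dl rh z" using ux(1) z(1) comp_refl by metis
  then have "length u = j" using comp_length z(2) by metis
  with ux(2) show ?case by auto
qed

lemma jword_deltaW: "jword dl rh n P w \<Longrightarrow> jword dl rh n P (deltaW dl rh i w)"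
  unfolding jword_def by (simp add: take_deltaW)

lemma lift_eq:
  assumes "P n = comp dl rh z0" "length z0 = n" "length x \<ge> n"
  shows "liftable (C, comp dl rh x) (P (n - 1), P n) \<longleftrightarrow> drop (length x - n) x \<in> P n"
  using lift_iff[OF assms(2,3), of dl rh] assms(1) by (simp add: liftable_def)

lemma jword_concat:
  assumes L: "P n = comp dl rh z0" "length z0 = n"
    and j1: "jword dl rh n P (X @ v)" and j2: "jword dl rh n P (v @ Y)" and v: "v \<in> P n"
  shows "jword dl rh n P (X @ v @ Y)"
proof -
  have lv: "length v = n" using v L comp_length by metis
  have A: "comp dl rh (take i (X @ v @ Y)) = P i" if "i \<le> min (length (X @ v @ Y)) n" for i
  proof -
    have "take i (X @ v @ Y) = take i (X @ v)" using that lv by (simp add: take_append)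
    moreover have "i \<le> min (length (X @ v)) n" using that lv by simp
    ultimately show ?thesis using j1 by (simp add: jword_def)
  qed
  have B: "liftable (comp dl rh (take i (X @ v @ Y)), comp dl rh (take (Suc i) (X @ v @ Y))) (P (n - 1), P n)"
    if "n \<le> i" "i < length (X @ v @ Y)" for i
  proof (cases "i < length (X @ v)")
    case True
    have "take i (X @ v @ Y) = take i (X @ v)" "take (Suc i) (X @ v @ Y) = take (Suc i) (X @ v)"
      using True by (simp_all add: take_append)
    then show ?thesis using j1 that(1) True by (simp add: jword_def)
  next
    case False
    define j where "j = i - length X"
    have ij: "i = length X + j" using False j_def by simp
    have jn: "n \<le> j" "j < length (v @ Y)" using False that lv ij by auto
    define w where "w = take (Suc j) (v @ Y)"
    have t: "take (Suc i) (X @ v @ Y) = X @ w"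
      using ij by (simp add: take_append w_def)
    have lt: "length w = Suc j" using jn by (simp add: w_def)
    have "liftable (comp dl rh (take j (v @ Y)), comp dl rh w) (P (n - 1), P n)"
      using j2 jn by (simp add: jword_def w_def)
    then have d: "drop (Suc j - n) w \<in> P n"
      using lift_eq[of P n dl rh z0 w, OF L] lt jn by simp
    have "drop (Suc i - n) (X @ w) = drop (Suc j - n) w"
      using ij jn by (simp add: Suc_diff_le)
    moreover have "length (X @ w) - n = Suc i - n" using lt ij by simp
    ultimately have "drop (length (X @ w) - n) (X @ w) \<in> P n" using d by metis
    then show ?thesis
      using lift_eq[of P n dl rh z0 "X @ w", OF L] t lt jn by simp
  qed
  show ?thesis using A B by (simp add: jword_def)
qed


lemma equiv_trans:
  assumes L: "P n = comp dl rh z0" "length z0 = n"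
    and "stem_equiv dl rh n P u v" "stem_equiv dl rh n P v w"
  shows "stem_equiv dl rh n P u w"
proof -
  obtain s where s: "u \<in> P n" "v \<in> P n" "jword dl rh n P (u @ s @ v)" "\<forall>t. rhoW dl rh (u @ s) t = t"
    using assms(3) by (auto simp: stem_equiv_def)
  obtain s' where s': "w \<in> P n" "jword dl rh n P (v @ s' @ w)" "\<forall>t. rhoW dl rh (v @ s') t = t"
    using assms(4) by (auto simp: stem_equiv_def)
  have "jword dl rh n P ((u @ s) @ v @ (s' @ w))"
  proof -
    have "jword dl rh n P ((u @ s) @ v)" using s(3) by simp
    then show ?thesis using jword_concat[of P n dl rh z0 "u @ s" v "s' @ w", OF L] s'(2) s(2) by blast
  qed
  then have j: "jword dl rh n P (u @ (s @ v @ s') @ w)" by simp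
  have r: "\<forall>t. rhoW dl rh (u @ (s @ v @ s')) t = t"
  proof
    fix t
    have "rhoW dl rh (u @ (s @ v @ s')) t = rhoW dl rh (v @ s') (rhoW dl rh (u @ s) t)"
      using rhoW_append[of dl rh "u @ s" "v @ s'"] by simp
    then show "rhoW dl rh (u @ (s @ v @ s')) t = t" using s(4) s'(3) by simp
  qed
  show ?thesis unfolding stem_equiv_def using s(1) s'(1) j r by blast
qed

lemma equiv_deltaW:
  assumes L: "P n = comp dl rh z0"
    and "stem_equiv dl rh n P u v"
  shows "stem_equiv dl rh n P (deltaW dl rh i u) (deltaW dl rh i v)"
proof -
  obtain s where s: "u \<in> P n" "v \<in> P n" "jword dl rh n P (u @ s @ v)" "\<forall>t. rhoW dl rh (u @ s) t = t"
    using assms(2) by (auto simp: stem_equiv_def)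
  have r: "rl rh (u @ s) i = i" "\<forall>t. rhoW dl rh (deltaW dl rh i (u @ s)) t = t"
    using s(4) rhoW_cons[of dl rh "u @ s" i] by (metis list.inject)+
  define s' where "s' = deltaW dl rh (rl rh u i) s"
  have e: "deltaW dl rh i (u @ s @ v) = deltaW dl rh i u @ s' @ deltaW dl rh i v"
    using deltaW_append[of dl rh i "u @ s" v] deltaW_append[of dl rh i u s] r(1)
    by (simp add: s'_def)
  have "deltaW dl rh i (u @ s) = deltaW dl rh i u @ s'"
    using deltaW_append[of dl rh i u s] by (simp add: s'_def)
  then have "\<forall>t. rhoW dl rh (deltaW dl rh i u @ s') t = t" using r(2) by simp
  moreover have "jword dl rh n P (deltaW dl rh i u @ s' @ deltaW dl rh i v)"
    using jword_deltaW[OF s(3), of i] e by simp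
  moreover have "deltaW dl rh i u \<in> P n" "deltaW dl rh i v \<in> P n"
    using s(1,2) L comp_mem_deltaW by metis+
  ultimately show ?thesis unfolding stem_equiv_def by blast
qed

lemma Ncount_deltaW:
  assumes inj: "\<And>i. inj (dl i)"
  shows "Ncount (deltaW dl rh i u) (deltaW dl rh i ` \<Gamma>) k = Ncount u \<Gamma> k"
proof -
  let ?A = "{v. length v = k \<and> (\<exists>st\<in>\<Gamma>. prefix (u @ v) st)}"
  let ?B = "{v. length v = k \<and> (\<exists>st\<in>deltaW dl rh i ` \<Gamma>. prefix (deltaW dl rh i u @ v) st)}"
  let ?g = "deltaW dl rh (rl rh u i)"
  have "?B = ?g ` ?A"
  proof
    show "?g ` ?A \<subseteq> ?B"
    proof
      fix v' assume "v' \<in> ?g ` ?A"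
      then obtain v st r where v: "v' = ?g v" "length v = k" "st \<in> \<Gamma>" "st = u @ v @ r"
        by (auto simp: prefix_def)
      have "deltaW dl rh i st = deltaW dl rh i u @ v' @ deltaW dl rh (rl rh (u @ v) i) r"
        using v by (simp add: deltaW_append rl_append)
      then show "v' \<in> ?B" using v by (auto simp: prefix_def)
    qed
  next
    show "?B \<subseteq> ?g ` ?A"
    proof
      fix v' assume "v' \<in> ?B"
      then obtain st where st: "length v' = k" "st \<in> \<Gamma>" "prefix (deltaW dl rh i u @ v') (deltaW dl rh i st)"
        by auto
      obtain r where r: "deltaW dl rh i st = deltaW dl rh i u @ v' @ r"
        using st(3) by (auto simp: prefix_def)
      have "length (deltaW dl rh i st) = length u + k + length r" using r st(1) by simp
      then have len: "length st \<ge> length u + k" by simp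
      have "take (length u) (deltaW dl rh i st) = deltaW dl rh i u"
        using r by simp
      then have "deltaW dl rh i (take (length u) st) = deltaW dl rh i u" by (simp add: take_deltaW)
      then have tu: "take (length u) st = u" using inj_deltaW[of dl rh i, OF inj] unfolding inj_def by blast
      have "drop (length u) (deltaW dl rh i st) = ?g (drop (length u) st)"
        by (simp add: drop_deltaW tu)
      moreover have "take k (drop (length u) (deltaW dl rh i st)) = v'"
        using st(1) r by simp
      ultimately have "v' = ?g (take k (drop (length u) st))" by (simp add: take_deltaW)
      moreover have "take k (drop (length u) st) \<in> ?A"
      proof -
        have e: "st = u @ drop (length u) st" using tu append_take_drop_id[of "length u" st] by simp
        have "prefix (u @ take k (drop (length u) st)) (u @ drop (length u) st)"
          by (simp add: take_is_prefix)
        then have "prefix (u @ take k (drop (length u) st)) st" by (simp only: e[symmetric])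
        then show ?thesis using st(2) len by auto
      qed
      ultimately show "v' \<in> ?g ` ?A" by blast
    qed
  qed
  then have "card ?B = card ?A"
    using inj_deltaW[of dl rh "rl rh u i", OF inj] card_image[of ?g ?A] by (simp add: inj_on_def inj_def)
  then show ?thesis by (simp add: Ncount_def)
qed


theorem proposition5p13:
  fixes dl :: "'a::finite \<Rightarrow> 'q::finite \<Rightarrow> 'q" and rh :: "'q \<Rightarrow> 'a \<Rightarrow> 'a"
    and n :: nat and P :: "nat \<Rightarrow> 'q list set"
  assumes "connected_aut dl rh" and "bireversible dl rh"
    and "\<not> (\<exists>B. branch dl rh B \<and> active_branch B \<and> self_liftable_branch B)"
    and "jungle_trunk dl rh n P"
    and "jword dl rh n P u" and "length u < n"
    and "stem_class dl rh n P \<gamma>" and "\<exists>st \<in> \<gamma>. prefix u st"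
    and "jword dl rh n P u'" and "length u' < n"
    and "stem_class dl rh n P \<gamma>'" and "\<exists>st \<in> \<gamma>'. prefix u' st"
    and "length u = length u'" and "length u + k \<le> n"
  shows "Ncount u \<gamma> k = Ncount u' \<gamma>' k"
proof -
  have inj: "\<And>i. inj (dl i)" using assms(2) by (auto simp: bireversible_def bij_is_inj)
  have ip: "init_path dl rh n P" using assms(4) by (simp add: jungle_trunk_def)
  obtain z0 where L: "P n = comp dl rh z0" "length z0 = n" using P_comp[OF ip, of n] by auto
  define L where "L = P n"
  have Lsub: "L \<subseteq> {xs. length xs = n}" using L comp_length unfolding L_def by blast
  have finL: "finite L"
    using finite_subset[OF Lsub] finite_lists_length_eq[of "UNIV :: 'q set" n] by simp
  define G where "G w = {v. stem_equiv dl rh n P w v}" for w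
  have GL: "G w \<subseteq> L" for w by (auto simp: G_def L_def stem_equiv_def)
  have finG: "finite (G w)" for w using finite_subset[OF GL finL] .
  have Lg: "deltaW dl rh i w \<in> L \<longleftrightarrow> w \<in> L" for i w
    unfolding L_def L(1) by (rule comp_mem_deltaW)
  have injg: "inj (deltaW dl rh i)" for i using inj_deltaW[OF inj] .
  have sub: "deltaW dl rh i ` G w \<subseteq> G (deltaW dl rh i w)" for i w
    using equiv_deltaW[of P n dl rh z0, OF L(1)] by (auto simp: G_def)
  define c where "c w = card (G w)" for w
  have cle: "c w \<le> c (deltaW dl rh i w)" for i w
  proof -
    have "c w = card (deltaW dl rh i ` G w)"
      unfolding c_def using card_image[of "deltaW dl rh i" "G w"] injg[of i]
      by (simp add: inj_on_def inj_def)
    also have "\<dots> \<le> c (deltaW dl rh i w)" unfolding c_def by (rule card_mono[OF finG sub])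
    finally show ?thesis .
  qed
  have gL: "deltaW dl rh i ` L = L" for i
    by (rule endo_inj_surj[OF finL]) (use Lg injg in \<open>auto simp: inj_on_def inj_def\<close>)
  have ceq: "c (deltaW dl rh i w) = c w" if "w \<in> L" for i w
  proof -
    have "sum c L = sum c (deltaW dl rh i ` L)" using gL by simp
    also have "\<dots> = sum (c \<circ> deltaW dl rh i) L"
      by (rule sum.reindex) (use injg in \<open>auto simp: inj_on_def inj_def\<close>)
    finally have "sum c L = sum (c \<circ> deltaW dl rh i) L" .
    then have "c w = (c \<circ> deltaW dl rh i) w"
      by (rule sum_mono_inv) (use cle that finL in auto)
    then show ?thesis by simp
  qed
  have Geq: "G (deltaW dl rh i w) = deltaW dl rh i ` G w" if "w \<in> L" for i w
  proof -
    have "card (deltaW dl rh i ` G w) = c w"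
      unfolding c_def using card_image[of "deltaW dl rh i" "G w"] injg[of i]
      by (simp add: inj_on_def inj_def)
    then have "card (deltaW dl rh i ` G w) = card (G (deltaW dl rh i w))"
      using ceq[OF that, of i] by (simp add: c_def)
    then show ?thesis using card_subset_eq[OF finG sub, of i w] by simp
  qed
  have cconst: "c v = c z0" if "v \<in> L" for v
    using comp_invariant[of dl rh z0 c v] ceq that unfolding L_def L(1) by blast
  have z0L: "z0 \<in> L" unfolding L_def L(1) by simp
  have cls: "G u0 = G w" if "w \<in> L" "u0 \<in> G w" for w u0
  proof -
    have u0L: "u0 \<in> L" using that GL by blast
    have "G u0 \<subseteq> G w" using that equiv_trans[of P n dl rh z0, OF L] unfolding G_def by blast
    moreover have "card (G u0) = card (G w)"
      using cconst[OF u0L] cconst[OF that(1)] by (simp add: c_def)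
    ultimately show ?thesis using card_subset_eq[OF finG] by blast
  qed
  define m where "m = length u"
  define h where "h w = Ncount (take m w) (G w) k" for w
  have heq: "h (deltaW dl rh i w) = h w" if "w \<in> L" for i w
    unfolding h_def using Geq[OF that] Ncount_deltaW[OF inj] by (simp add: take_deltaW)
  have hconst: "h v = h z0" if "v \<in> L" for v
    using comp_invariant[of dl rh z0 h v] heq that unfolding L_def L(1) by blast
  have key: "Ncount x \<delta> k = h z0" if kk: "stem_class dl rh n P \<delta>" "\<exists>st \<in> \<delta>. prefix x st"
    "length x = m" for x \<delta>
  proof -
    obtain w0 where w0: "w0 \<in> L" "\<delta> = G w0"
      using kk(1) unfolding stem_class_def G_def L_def by blast
    obtain st where st: "st \<in> \<delta>" "prefix x st" using kk(2) by blast
    have tx: "take m st = x" using st(2) kk(3) by (auto simp: prefix_def)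
    have stL: "st \<in> L" using st(1) w0(2) GL by blast
    have "G st = \<delta>" using cls[OF w0(1)] st(1) w0(2) by simp
    then have "Ncount x \<delta> k = h st" by (simp add: h_def tx)
    then show ?thesis using hconst[OF stL] by simp
  qed
  show ?thesis
    using key[OF assms(7,8)] key[OF assms(11,12)] assms(13) by (simp add: m_def)
qed

end
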